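(* Let $P$ be a Poisson bracket on $\mathbb{R}^n$, let $\ast_\nu$ be a star-product on $(\mathbb{R}^n,P)$, and let $\odot_\nu$ be the sun-product associated to $\ast_\nu$, defined on $\mathsf{N}^0_\nu$. Then $\odot_\nu$ is an Abelian, associative product on $\mathsf{N}^0_\nu$; it is $\mathbb{R}$-bilinear but fails to be $\mathbb{R}[[\nu]]$-bilinear. Consequently $\mathsf{N}^0_\nu$ endowed with $\odot_\nu$ is an Abelian $\mathbb{R}$-algebra.
   Context: Let $\mathsf{N}=C^\infty(\mathbb{R}^n)$ (real-valued), with coordinates $x_1,\dots,x_n$, and $\mathsf{Pol}=\mathbb{R}[x_1,\dots,x_n]\subset\mathsf{N}$. For a formal parameter $\nu$, $\mathsf{N}_\nu=\mathsf{N}[[\nu]]$, and $\mathsf{N}^0_\nu\subset\mathsf{N}_\nu$ is the subalgebra of formal series whose $\nu^0$-coefficient lies in $\mathsf{Pol}$; $\pi:\mathsf{N}_\nu\to\mathsf{N}$ is the projection onto the $\nu^0$-coefficient. A (differential) star-product on $(\mathbb{R}^n,P)$ is a bilinear map $f\ast_\nu g=\sum_{r\ge0}\nu^rC_r(f,g)$ from $\mathsf{N}\times\mathsf{N}$ to $\mathsf{N}[[\nu]]$, extended $\mathbb{R}[[\nu]]$-bilinearly to $\mathsf{N}_\nu$, where the $C_r$ are bidifferential operators with: $C_0(f,g)=fg$; $C_r(c,f)=C_r(f,c)=0$ for $r\ge1$ and constants $c$; associativity $\sum_{s+t=r}C_s(C_t(f,g),h)=\sum_{s+t=r}C_s(f,C_t(g,h))$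 for all $r\ge0$; and $C_1(f,g)-C_1(g,f)=2P(f,g)$. Let $\mathcal{S}(\mathsf{Pol})$ be the symmetric tensor algebra over $\mathsf{Pol}$ with product $\otimes$, let $\lambda:\mathsf{Pol}\to\mathcal{S}(\mathsf{Pol})$ be the $\mathbb{R}$-algebra homomorphism with $\lambda(x_1^{k_1}\cdots x_n^{k_n})=x_1^{\otimes k_1}\otimes\cdots\otimes x_n^{\otimes k_n}$, and let $T_{\ast_\nu}:\mathcal{S}(\mathsf{Pol})\to\mathsf{N}^0_\nu$ be the $\mathbb{R}$-linear map with $T_{\ast_\nu}(I)=1$ ($I$ the unit of $\mathcal{S}(\mathsf{Pol})$) and $T_{\ast_\nu}(f_1\otimes\cdots\otimes f_k)=\frac1{k!}\sum_{\sigma\in S_k}f_{\sigma(1)}\ast_\nu\cdots\ast_\nu f_{\sigma(k)}$ for $f_i\in\mathsf{Pol}$. The sun-product associated to $\ast_\nu$ is $f\odot_\nu g=T_{\ast_\nu}(\lambda(\pi(f))\otimes\lambda(\pi(g)))$ for $f,g\in\mathsf{N}^0_\nu$. *)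

theory Defs
  imports "HOL-Analysis.Analysis" "HOL-Library.Multiset" "HOL-Combinatorics.Permutations"
begin

type_synonym 'n fn = "real^'n \<Rightarrow> real"
type_synonym 'n fser = "nat \<Rightarrow> 'n fn"   (* element of N[[nu]]: sequence of coefficients *)

definition pd :: "'n::finite \<Rightarrow> 'n fn \<Rightarrow> 'n fn" where
  "pd i f = (\<lambda>x. deriv (\<lambda>t. f (x + t *\<^sub>R axis i 1)) 0)"

fun pds :: "'n::finite list \<Rightarrow> 'n fn \<Rightarrow> 'n fn" where
  "pds [] f = f"
| "pds (i # is) f = pd i (pds is f)"

definition smooth :: "('n::finite) fn \<Rightarrow> bool" where
  "smooth f \<longleftrightarrow> (\<forall>is. continuous_on UNIV (pds is f) \<and>
      (\<forall>i x. (\<lambda>t. pds is f (x + t *\<^sub>R axis i 1)) field_differentiable (at 0)))"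

definition coord :: "'n::finite \<Rightarrow> 'n fn" where
  "coord i = (\<lambda>x. x $ i)"

definition monom :: "('n::finite \<Rightarrow> nat) \<Rightarrow> 'n fn" where
  "monom m = (\<lambda>x. \<Prod>i\<in>UNIV. (x $ i) ^ (m i))"

definition is_pol :: "('n::finite) fn \<Rightarrow> bool" where
  "is_pol p \<longleftrightarrow> (\<exists>c. finite {m. c m \<noteq> 0} \<and>
      p = (\<lambda>x. \<Sum>m\<in>{m. c m \<noteq> 0}. c m * monom m x))"

definition pol_coeffs :: "('n::finite) fn \<Rightarrow> ('n \<Rightarrow> nat) \<Rightarrow> real" where
  "pol_coeffs p = (THE c. finite {m. c m \<noteq> 0} \<and>
      p = (\<lambda>x. \<Sum>m\<in>{m. c m \<noteq> 0}. c m * monom m x))"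

definition bidiff :: "('n::finite fn \<Rightarrow> 'n fn \<Rightarrow> 'n fn) \<Rightarrow> bool" where
  "bidiff B \<longleftrightarrow> (\<exists>S c. finite (S :: ('n list \<times> 'n list) set) \<and> (\<forall>ab\<in>S. smooth (c ab)) \<and>
      (\<forall>f g. smooth f \<longrightarrow> smooth g \<longrightarrow>
         B f g = (\<lambda>x. \<Sum>(a,b)\<in>S. c (a,b) x * pds a f x * pds b g x)))"

definition poisson_bracket :: "('n::finite fn \<Rightarrow> 'n fn \<Rightarrow> 'n fn) \<Rightarrow> bool" where
  "poisson_bracket P \<longleftrightarrow>
     (\<forall>f g. smooth f \<longrightarrow> smooth g \<longrightarrow> smooth (P f g)) \<and>
     (\<forall>a b f g h. smooth f \<longrightarrow> smooth g \<longrightarrow> smooth h \<longrightarrow>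
         P (\<lambda>x. a * f x + b * g x) h = (\<lambda>x. a * P f h x + b * P g h x)) \<and>
     (\<forall>f g. smooth f \<longrightarrow> smooth g \<longrightarrow> P f g = (\<lambda>x. - P g f x)) \<and>
     (\<forall>f g h. smooth f \<longrightarrow> smooth g \<longrightarrow> smooth h \<longrightarrow>
         P f (\<lambda>x. g x * h x) = (\<lambda>x. P f g x * h x + g x * P f h x)) \<and>
     (\<forall>f g h. smooth f \<longrightarrow> smooth g \<longrightarrow> smooth h \<longrightarrow>
         (\<lambda>x. P f (P g h) x + P g (P h f) x + P h (P f g) x) = (\<lambda>x. 0))"

text \<open>A star-product sum_r nu^r C_r on (R^n, P), given by its family of cochains C.\<close>

definition star_product :: "('n::finite fn \<Rightarrow> 'n fn \<Rightarrow> 'n fn) \<Rightarrow> (nat \<Rightarrow> 'n fn \<Rightarrow> 'n fn \<Rightarrow> 'n fn) \<Rightarrow> bool" where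
  "star_product P C \<longleftrightarrow>
     (\<forall>r. bidiff (C r)) \<and>
     (\<forall>f g. smooth f \<longrightarrow> smooth g \<longrightarrow> C 0 f g = (\<lambda>x. f x * g x)) \<and>
     (\<forall>r c f. r \<ge> 1 \<longrightarrow> smooth f \<longrightarrow>
         C r (\<lambda>x. c) f = (\<lambda>x. 0) \<and> C r f (\<lambda>x. c) = (\<lambda>x. 0)) \<and>
     (\<forall>r f g h. smooth f \<longrightarrow> smooth g \<longrightarrow> smooth h \<longrightarrow>
         (\<lambda>x. \<Sum>s\<le>r. C s (C (r - s) f g) h x) = (\<lambda>x. \<Sum>s\<le>r. C s f (C (r - s) g h) x)) \<and>
     (\<forall>f g. smooth f \<longrightarrow> smooth g \<longrightarrow> (\<lambda>x. C 1 f g x - C 1 g f x) = (\<lambda>x. 2 * P f g x))"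

definition const_ser :: "'n fn \<Rightarrow> 'n fser" where
  "const_ser f = (\<lambda>r. if r = 0 then f else (\<lambda>x. 0))"

definition one_ser :: "'n fser" where
  "one_ser = const_ser (\<lambda>x. 1)"

definition ser_add :: "'n fser \<Rightarrow> 'n fser \<Rightarrow> 'n fser" where
  "ser_add F G = (\<lambda>r x. F r x + G r x)"

definition ser_scale :: "real \<Rightarrow> 'n fser \<Rightarrow> 'n fser" where
  "ser_scale a F = (\<lambda>r x. a * F r x)"

text \<open>Multiplication by a scalar c in R[[nu]].\<close>
definition ser_smult :: "(nat \<Rightarrow> real) \<Rightarrow> 'n fser \<Rightarrow> 'n fser" where
  "ser_smult c F = (\<lambda>r x. \<Sum>s\<le>r. c s * F (r - s) x)"

definition N0 :: "('n::finite) fser set" where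
  "N0 = {F. (\<forall>r. smooth (F r)) \<and> is_pol (F 0)}"

definition proj0 :: "'n fser \<Rightarrow> 'n fn" where
  "proj0 F = F 0"

text \<open>R[[nu]]-bilinear extension of the star product to N[[nu]].\<close>
definition star :: "(nat \<Rightarrow> 'n fn \<Rightarrow> 'n fn \<Rightarrow> 'n fn) \<Rightarrow> 'n fser \<Rightarrow> 'n fser \<Rightarrow> 'n fser" where
  "star C F G = (\<lambda>r x. \<Sum>s\<le>r. \<Sum>t\<le>r - s. C s (F t) (G (r - s - t)) x)"

fun star_list :: "(nat \<Rightarrow> 'n fn \<Rightarrow> 'n fn \<Rightarrow> 'n fn) \<Rightarrow> 'n fn list \<Rightarrow> 'n fser" where
  "star_list C [] = one_ser"
| "star_list C (f # fs) = star C (const_ser f) (star_list C fs)"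

text \<open>An element of S(Pol) is represented as a finitely supported real combination of
  monomials f_1 (x) ... (x) f_k, a monomial being the multiset {#f_1,...,f_k#}
  (multilinearity relations are not quotiented out; T is well defined on this
  presentation since star is bilinear).\<close>

type_synonym 'n sym_tensor = "'n fn multiset \<Rightarrow> real"

definition tunit :: "'n sym_tensor" where
  "tunit = (\<lambda>M. if M = {#} then 1 else 0)"

definition tprod :: "'n sym_tensor \<Rightarrow> 'n sym_tensor \<Rightarrow> 'n sym_tensor" where
  "tprod A B = (\<lambda>M. \<Sum>N\<in>{N. N \<subseteq># M}. A N * B (M - N))"

definition monoset :: "('n::finite \<Rightarrow> nat) \<Rightarrow> 'n fn multiset" where
  "monoset m = (\<Sum>i\<in>UNIV. replicate_mset (m i) (coord i))"

text \<open>lambda: x_1^k_1 ... x_n^k_n  |->  x_1^(x)k_1 (x) ... (x) x_n^(x)k_n, extended linearly.\<close>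
definition lam :: "('n::finite) fn \<Rightarrow> 'n sym_tensor" where
  "lam p = (\<lambda>M. \<Sum>m\<in>{m. pol_coeffs p m \<noteq> 0 \<and> monoset m = M}. pol_coeffs p m)"

definition Tmon :: "(nat \<Rightarrow> 'n fn \<Rightarrow> 'n fn \<Rightarrow> 'n fn) \<Rightarrow> 'n fn multiset \<Rightarrow> 'n fser" where
  "Tmon C M = (let w = (SOME w. mset w = M); k = length w in
      (\<lambda>r x. (1 / fact k) *
         (\<Sum>\<sigma>\<in>{\<sigma>. \<sigma> permutes {..<k}}. star_list C (map (\<lambda>i. w ! \<sigma> i) [0..<k]) r x)))"

definition Tstar :: "(nat \<Rightarrow> 'n fn \<Rightarrow> 'n fn \<Rightarrow> 'n fn) \<Rightarrow> 'n sym_tensor \<Rightarrow> 'n fser" where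
  "Tstar C A = (\<lambda>r x. \<Sum>M\<in>{M. A M \<noteq> 0}. A M * Tmon C M r x)"

definition sun :: "(nat \<Rightarrow> ('n::finite) fn \<Rightarrow> 'n fn \<Rightarrow> 'n fn) \<Rightarrow> 'n fser \<Rightarrow> 'n fser \<Rightarrow> 'n fser" where
  "sun C F G = Tstar C (tprod (lam (proj0 F)) (lam (proj0 G)))"

end

theory Submission
  imports Defs
begin

lemma finite_submsets: "finite {N. N \<subseteq># (M::'a multiset)}"
proof (induction M)
  case empty then show ?case by simp
next
  case (add a M)
  have "{N. N \<subseteq># add_mset a M} \<subseteq> {N. N \<subseteq># M} \<union> add_mset a ` {N. N \<subseteq># M}"
  proof
    fix N assume "N \<in> {N. N \<subseteq># add_mset a M}"
    then have N: "N \<subseteq># add_mset a M" by simp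
    show "N \<in> {N. N \<subseteq># M} \<union> add_mset a ` {N. N \<subseteq># M}"
    proof (cases "a \<in># N")
      case True
      then obtain N' where "N = add_mset a N'" by (metis multi_member_split)
      with N have "N' \<subseteq># M" by (simp add: mset_subset_eq_add_mset_cancel)
      then show ?thesis using \<open>N = add_mset a N'\<close> by blast
    next
      case False
      then have "N \<subseteq># M" using N
        by (metis add_mset_remove_trivial diff_single_trivial subset_eq_diff_conv union_commute add_mset_add_single subset_mset.add_diff_inverse)
      then show ?thesis by blast
    qed
  qed
  then show ?case using add by (meson finite_UnI finite_imageI finite_subset)
qed

lemma coord_inj: "coord i = coord j \<longleftrightarrow> i = j"
proof
  assume "coord i = coord j"
  then have "(axis i (1::real)) $ i = (axis i 1) $ j" unfolding coord_def by metis
  then show "i = j" by (auto simp: axis_def split: if_splits)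
qed simp

lemma count_monoset: "count (monoset m) (coord i) = m i"
  unfolding monoset_def by (simp add: count_sum coord_inj)

lemma monoset_inj: "monoset a = monoset b \<Longrightarrow> a = b"
  by (metis count_monoset ext)

lemma monoset_add: "monoset (\<lambda>i. a i + b i) = monoset a + monoset b"
  unfolding monoset_def by (rule multiset_eqI) (auto simp add: count_sum sum.distrib[symmetric] intro!: sum.cong)

lemma set_monoset: "f \<in># monoset m \<Longrightarrow> \<exists>i. f = coord i"
proof -
  assume "f \<in># monoset m"
  then have "count (monoset m) f > 0" by simp
  then obtain i where "count (replicate_mset (m i) (coord i)) f > 0"
    unfolding monoset_def count_sum using sum.neutral[of UNIV "\<lambda>i. count (replicate_mset (m i) (coord i)) f"] by force
  then show ?thesis by (auto split: if_splits)
qed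

lemma monom_split: "monom m x = (x$j)^(m j) * monom (m(j:=0)) x"
proof -
  have "monom m x = (x$j)^(m j) * (\<Prod>i\<in>UNIV-{j}. (x$i)^(m i))"
    unfolding monom_def by (simp add: prod.remove)
  moreover have "monom (m(j:=0)) x = (\<Prod>i\<in>UNIV-{j}. (x$i)^(m i))"
    unfolding monom_def by (simp add: prod.remove[of UNIV j])
  ultimately show ?thesis by simp
qed

lemma monom_upd: "monom (m(j:=0)) (\<chi> i. if i = j then t else x$i) = monom (m(j:=0)) x"
  unfolding monom_def by (rule prod.cong) auto

lemma univ_zero:
  fixes a :: "nat \<Rightarrow> real"
  assumes "finite K" "\<And>t::real. (\<Sum>k\<in>K. a k * t^k) = 0" "k \<in> K"
  shows "a k = 0"
proof -
  define n where "n = Max K"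
  define b where "b i = (if i \<in> K then a i else 0)" for i
  have "(\<Sum>i\<le>n. b i * t^i) = (\<Sum>k\<in>K. a k * t^k)" for t::real
  proof -
    have "(\<Sum>i\<le>n. b i * t^i) = (\<Sum>i\<in>K. b i * t^i)"
      by (rule sum.mono_neutral_right) (auto simp: b_def n_def assms(1))
    then show ?thesis by (simp add: b_def)
  qed
  then have "\<forall>t::real. (\<Sum>i\<le>n. b i * t^i) = 0" using assms(2) by simp
  then have "\<forall>i\<le>n. b i = 0" using polyfun_eq_0 by blast
  moreover have "k \<le> n" using assms by (simp add: n_def)
  ultimately show ?thesis using assms(3) unfolding b_def by (metis (full_types))
qed

lemma uniq_aux:
  fixes V :: "'n::finite set"
  assumes "finite V"
  shows "\<forall>S c. finite S \<and> (\<forall>m\<in>S. \<forall>i. i \<notin> V \<longrightarrow> m i = 0) \<and>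
     (\<forall>x::real^'n. (\<Sum>m\<in>S. c m * monom m x) = 0) \<longrightarrow> (\<forall>m\<in>S. c m = 0)"
  using assms
proof (induction V rule: finite_induct)
  case empty
  show ?case
  proof (intro allI impI ballI)
    fix S c m
    assume H: "finite S \<and> (\<forall>m\<in>S. \<forall>i. i \<notin> ({}::'n set) \<longrightarrow> m i = 0) \<and>
      (\<forall>x::real^'n. (\<Sum>m\<in>S. c m * monom m x) = 0)" and m: "m \<in> S"
    have "S \<subseteq> {\<lambda>i. 0}" using H by auto
    then have S: "S = {\<lambda>i. 0}" using m by auto
    have "(\<Sum>m\<in>S. c m * monom m (0::real^'n)) = 0" using H by blast
    then have "c (\<lambda>i. 0) = 0" using S by (simp add: monom_def)
    then show "c m = 0" using S m by simp
  qed
next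
  case (insert j V)
  show ?case
  proof (intro allI impI ballI)
    fix S c m0
    assume H: "finite S \<and> (\<forall>m\<in>S. \<forall>i. i \<notin> insert j V \<longrightarrow> m i = 0) \<and>
      (\<forall>x::real^'n. (\<Sum>m\<in>S. c m * monom m x) = 0)" and m0: "m0 \<in> S"
    have fS: "finite S" using H by blast
    define K where "K = (\<lambda>m. m j) ` S"
    have fK: "finite K" using fS by (simp add: K_def)
    define g where "g k x = (\<Sum>m\<in>{m\<in>S. m j = k}. c m * monom (m(j:=0)) x)" for k x
    have g0: "g k x = 0" if "k \<in> K" for k and x :: "real^'n"
    proof -
      have "(\<Sum>k\<in>K. g k x * t^k) = 0" for t :: real
      proof -
        define y :: "real^'n" where "y = (\<chi> i. if i = j then t else x$i)"
        have "(\<Sum>k\<in>K. g k x * t^k) = (\<Sum>k\<in>K. \<Sum>m\<in>{m\<in>S. m j = k}. c m * monom m y)"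
        proof (rule sum.cong[OF refl])
          fix k assume "k \<in> K"
          have "g k x * t^k = (\<Sum>m\<in>{m\<in>S. m j = k}. c m * monom (m(j:=0)) x * t^k)"
            unfolding g_def by (simp add: sum_distrib_right)
          also have "\<dots> = (\<Sum>m\<in>{m\<in>S. m j = k}. c m * monom m y)"
          proof (rule sum.cong[OF refl])
            fix m assume "m \<in> {m\<in>S. m j = k}"
            then have "m j = k" by simp
            moreover have "y $ j = t" by (simp add: y_def)
            ultimately show "c m * monom (m(j:=0)) x * t^k = c m * monom m y"
              using monom_split[of m y j] monom_upd[of m j t x] unfolding y_def by simp
          qed
          finally show "g k x * t^k = (\<Sum>m\<in>{m\<in>S. m j = k}. c m * monom m y)" .
        qed
        also have "\<dots> = (\<Sum>m\<in>S. c m * monom m y)"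
          by (rule sum.group) (auto simp: fS fK K_def)
        also have "\<dots> = 0" using H by blast
        finally show ?thesis .
      qed
      then show ?thesis using univ_zero[OF fK, of "\<lambda>k. g k x"] that by blast
    qed
    define k0 where "k0 = m0 j"
    have k0K: "k0 \<in> K" using m0 by (simp add: K_def k0_def)
    define S' where "S' = (\<lambda>m. m(j:=0)) ` {m\<in>S. m j = k0}"
    define c' where "c' m' = c (m'(j:=k0))" for m'
    have inj: "inj_on (\<lambda>m. m(j:=0)) {m\<in>S. m j = k0}"
    proof (rule inj_onI)
      fix a b assume "a \<in> {m\<in>S. m j = k0}" "b \<in> {m\<in>S. m j = k0}" "a(j:=0) = b(j:=0)"
      then show "a = b" by (metis (mono_tags, lifting) fun_upd_triv fun_upd_upd mem_Collect_eq)
    qed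
    have "\<forall>S c. finite S \<and> (\<forall>m\<in>S. \<forall>i. i \<notin> V \<longrightarrow> m i = 0) \<and>
     (\<forall>x::real^'n. (\<Sum>m\<in>S. c m * monom m x) = 0) \<longrightarrow> (\<forall>m\<in>S. c m = 0)" by (rule insert.IH)
    moreover have "finite S'" using fS by (simp add: S'_def)
    moreover have "\<forall>m\<in>S'. \<forall>i. i \<notin> V \<longrightarrow> m i = 0"
      using H by (auto simp: S'_def)
    moreover have "\<forall>x::real^'n. (\<Sum>m\<in>S'. c' m * monom m x) = 0"
    proof
      fix x :: "real^'n"
      have "(\<Sum>m\<in>S'. c' m * monom m x) = (\<Sum>m\<in>{m\<in>S. m j = k0}. c' (m(j:=0)) * monom (m(j:=0)) x)"
        unfolding S'_def by (rule sum.reindex[OF inj, unfolded comp_def])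
      also have "\<dots> = g k0 x" unfolding g_def c'_def
        by (rule sum.cong) auto
      finally show "(\<Sum>m\<in>S'. c' m * monom m x) = 0" using g0[OF k0K] by simp
    qed
    ultimately have "\<forall>m\<in>S'. c' m = 0" by blast
    moreover have "m0(j:=0) \<in> S'" using m0 by (auto simp: S'_def k0_def)
    ultimately have "c' (m0(j:=0)) = 0" by blast
    then show "c m0 = 0" by (simp add: c'_def k0_def)
  qed
qed

lemma monom_uniq:
  assumes "finite S" "\<And>x::real^'n::finite. (\<Sum>m\<in>S. c m * monom m x) = 0" "m \<in> S"
  shows "c m = 0"
  using uniq_aux[of "UNIV::'n set"] assms by auto

definition supp :: "(('n::finite \<Rightarrow> nat) \<Rightarrow> real) \<Rightarrow> ('n \<Rightarrow> nat) set" where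
  "supp c = {m. c m \<noteq> 0}"

definition Fn :: "('n::finite \<Rightarrow> nat) set \<Rightarrow> (('n \<Rightarrow> nat) \<Rightarrow> real) \<Rightarrow> 'n fn" where
  "Fn S c = (\<lambda>x. \<Sum>m\<in>S. c m * monom m x)"

definition Ten :: "('n::finite \<Rightarrow> nat) set \<Rightarrow> (('n \<Rightarrow> nat) \<Rightarrow> real) \<Rightarrow> 'n sym_tensor" where
  "Ten S c = (\<lambda>M. \<Sum>m\<in>S. c m * (if monoset m = M then 1 else 0))"

lemma Fn_super: "finite U \<Longrightarrow> supp c \<subseteq> U \<Longrightarrow> Fn U c = Fn (supp c) c"
  unfolding Fn_def by (rule ext, rule sum.mono_neutral_right) (auto simp: supp_def)

lemma Ten_super: "finite U \<Longrightarrow> supp c \<subseteq> U \<Longrightarrow> Ten U c = Ten (supp c) c"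
  unfolding Ten_def by (rule ext, rule sum.mono_neutral_right) (auto simp: supp_def)

lemma pc_eq:
  assumes "finite (supp c)" "p = Fn (supp c) c"
  shows "pol_coeffs p = c"
  unfolding pol_coeffs_def
proof (rule the_equality)
  show "finite {m. c m \<noteq> 0} \<and> p = (\<lambda>x. \<Sum>m\<in>{m. c m \<noteq> 0}. c m * monom m x)"
    using assms by (simp add: supp_def Fn_def)
next
  fix d assume H: "finite {m. d m \<noteq> 0} \<and> p = (\<lambda>x. \<Sum>m\<in>{m. d m \<noteq> 0}. d m * monom m x)"
  define U where "U = supp c \<union> supp d"
  have fU: "finite U" using H assms by (simp add: U_def supp_def)
  have "p = Fn U d" using H Fn_super[OF fU, of d] by (simp add: U_def supp_def Fn_def)
  moreover have "p = Fn U c" using assms Fn_super[OF fU, of c] by (simp add: U_def)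
  ultimately have "\<And>x. Fn U d x - Fn U c x = 0" by simp
  then have "\<And>x. (\<Sum>m\<in>U. (d m - c m) * monom m x) = 0"
    unfolding Fn_def by (simp add: left_diff_distrib sum_subtractf)
  then have "\<And>m. m \<in> U \<Longrightarrow> d m - c m = 0" using monom_uniq[OF fU, of "\<lambda>m. d m - c m"] by blast
  show "d = c"
  proof
    fix m show "d m = c m"
      using \<open>\<And>m. m \<in> U \<Longrightarrow> d m - c m = 0\<close>[of m] by (cases "m \<in> U") (auto simp: U_def supp_def)
  qed
qed

lemma pol_rep:
  assumes "is_pol p"
  shows "finite (supp (pol_coeffs p)) \<and> p = Fn (supp (pol_coeffs p)) (pol_coeffs p)"
proof -
  obtain c where c: "finite {m. c m \<noteq> 0}" "p = (\<lambda>x. \<Sum>m\<in>{m. c m \<noteq> 0}. c m * monom m x)"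
    using assms unfolding is_pol_def by blast
  then have "pol_coeffs p = c" by (intro pc_eq) (auto simp: supp_def Fn_def)
  then show ?thesis using c by (simp add: supp_def Fn_def)
qed

lemma is_pol_Fn: "finite (supp c) \<Longrightarrow> is_pol (Fn (supp c) c)"
  unfolding is_pol_def supp_def Fn_def by blast

lemma lam_Ten:
  assumes "is_pol p"
  shows "lam p = Ten (supp (pol_coeffs p)) (pol_coeffs p)"
proof (rule ext)
  fix M
  have f: "finite (supp (pol_coeffs p))" using pol_rep[OF assms] by blast
  have "{m. pol_coeffs p m \<noteq> 0 \<and> monoset m = M} = {m \<in> supp (pol_coeffs p). monoset m = M}"
    by (auto simp: supp_def)
  then show "lam p M = Ten (supp (pol_coeffs p)) (pol_coeffs p) M"
    unfolding lam_def Ten_def by (simp add: sum.inter_filter[OF f] if_distrib cong: if_cong)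
qed

definition padd :: "('n \<Rightarrow> nat) \<Rightarrow> ('n \<Rightarrow> nat) \<Rightarrow> ('n \<Rightarrow> nat)" where
  "padd a b = (\<lambda>i. a i + b i)"

lemma group_conv:
  fixes \<phi> :: "('n \<Rightarrow> nat) \<Rightarrow> real"
  assumes "finite S" "finite T"
  shows "(\<Sum>m\<in>(\<lambda>(a,b). padd a b) ` (S \<times> T).
            (\<Sum>ab\<in>{ab \<in> S \<times> T. (\<lambda>(a,b). padd a b) ab = m}. (\<lambda>(a,b). c a * d b) ab) * \<phi> m)
       = (\<Sum>(a,b)\<in>S \<times> T. c a * d b * \<phi> (padd a b))"
proof -
  have "(\<Sum>m\<in>(\<lambda>(a,b). padd a b) ` (S \<times> T).
            (\<Sum>ab\<in>{ab \<in> S \<times> T. (\<lambda>(a,b). padd a b) ab = m}. (\<lambda>(a,b). c a * d b) ab) * \<phi> m)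
     = (\<Sum>m\<in>(\<lambda>(a,b). padd a b) ` (S \<times> T).
            (\<Sum>ab\<in>{ab \<in> S \<times> T. (\<lambda>(a,b). padd a b) ab = m}. (\<lambda>(a,b). c a * d b * \<phi> (padd a b)) ab))"
    by (rule sum.cong[OF refl]) (auto simp: sum_distrib_right intro!: sum.cong)
  also have "\<dots> = (\<Sum>(a,b)\<in>S \<times> T. c a * d b * \<phi> (padd a b))"
    by (rule sum.group) (use assms in auto)
  finally show ?thesis .
qed

lemma monom_padd: "monom (padd a b) x = monom a x * monom b x"
  unfolding monom_def padd_def by (simp add: power_add prod.distrib)

lemma monoset_padd: "monoset (padd a b) = monoset a + monoset b"
  unfolding padd_def by (rule monoset_add)

lemma tprod_delta:
  "(\<Sum>N\<in>{N. N \<subseteq># M}. (if X = N then 1 else 0) * (if Y = M - N then 1 else (0::real)))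
     = (if X + Y = M then 1 else 0)"
proof (cases "X \<subseteq># M")
  case True
  have "(\<Sum>N\<in>{N. N \<subseteq># M}. (if X = N then 1 else 0) * (if Y = M - N then 1 else (0::real)))
      = (\<Sum>N\<in>{N. N \<subseteq># M}. (if X = N then (if Y = M - N then 1 else 0) else (0::real)))"
    by (rule sum.cong) auto
  also have "\<dots> = (if Y = M - X then 1 else 0)" using True finite_submsets[of M]
    by (simp add: sum.delta)
  also have "\<dots> = (if X + Y = M then 1 else 0)" using True
    by (metis add_diff_cancel_left' subset_mset.add_diff_inverse)
  finally show ?thesis .
next
  case False
  then have "X + Y \<noteq> M" by auto
  moreover have "(\<Sum>N\<in>{N. N \<subseteq># M}. (if X = N then 1 else 0) * (if Y = M - N then 1 else (0::real))) = 0"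
    using False by (intro sum.neutral) auto
  ultimately show ?thesis by simp
qed

lemma tprod_Ten:
  assumes "finite S" "finite T"
  shows "tprod (Ten S c) (Ten T d) = (\<lambda>M. \<Sum>(a,b)\<in>S \<times> T. c a * d b * (if monoset (padd a b) = M then 1 else 0))"
proof (rule ext)
  fix M
  define F where "F a b N = c a * d b * ((if monoset a = N then 1 else 0) * (if monoset b = M - N then 1 else (0::real)))" for a b N
  have "tprod (Ten S c) (Ten T d) M = (\<Sum>N\<in>{N. N \<subseteq># M}. \<Sum>a\<in>S. \<Sum>b\<in>T. F a b N)"
    unfolding tprod_def Ten_def F_def by (simp add: sum_product mult_ac)
  also have "\<dots> = (\<Sum>a\<in>S. \<Sum>N\<in>{N. N \<subseteq># M}. \<Sum>b\<in>T. F a b N)"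
    by (rule sum.swap)
  also have "\<dots> = (\<Sum>a\<in>S. \<Sum>b\<in>T. \<Sum>N\<in>{N. N \<subseteq># M}. F a b N)"
    by (rule sum.cong[OF refl], rule sum.swap)
  also have "\<dots> = (\<Sum>a\<in>S. \<Sum>b\<in>T. c a * d b * (if monoset (padd a b) = M then 1 else 0))"
    unfolding F_def by (simp add: sum_distrib_left[symmetric] tprod_delta monoset_padd)
  also have "\<dots> = (\<Sum>(a,b)\<in>S \<times> T. c a * d b * (if monoset (padd a b) = M then 1 else 0))"
    by (simp add: sum.cartesian_product)
  finally show "tprod (Ten S c) (Ten T d) M = (\<Sum>(a,b)\<in>S \<times> T. c a * d b * (if monoset (padd a b) = M then 1 else 0))" .
qed

lemma pol_mult:
  assumes "is_pol p" "is_pol q"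
  shows "is_pol (\<lambda>x. p x * q x) \<and> lam (\<lambda>x. p x * q x) = tprod (lam p) (lam q)"
proof -
  define cp where "cp = pol_coeffs p"
  define cq where "cq = pol_coeffs q"
  define S where "S = supp cp"
  define T where "T = supp cq"
  have fS: "finite S" and p: "p = Fn S cp" using pol_rep[OF assms(1)] by (auto simp: S_def cp_def)
  have fT: "finite T" and q: "q = Fn T cq" using pol_rep[OF assms(2)] by (auto simp: T_def cq_def)
  define U where "U = (\<lambda>(a,b). padd a b) ` (S \<times> T)"
  define e where "e m = (\<Sum>ab\<in>{ab \<in> S \<times> T. (\<lambda>(a,b). padd a b) ab = m}. (\<lambda>(a,b). cp a * cq b) ab)" for m
  have fU: "finite U" using fS fT by (simp add: U_def)
  have sU: "supp e \<subseteq> U"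
  proof
    fix m assume "m \<in> supp e"
    then have "{ab \<in> S \<times> T. (\<lambda>(a,b). padd a b) ab = m} \<noteq> {}" unfolding supp_def e_def by force
    then show "m \<in> U" unfolding U_def by force
  qed
  have fe: "finite (supp e)" using sU fU finite_subset by blast
  have pq: "(\<lambda>x. p x * q x) = Fn U e"
  proof (rule ext)
    fix x
    have "p x * q x = (\<Sum>(a,b)\<in>S \<times> T. cp a * cq b * monom (padd a b) x)"
      unfolding p q Fn_def by (simp add: sum_product sum.cartesian_product monom_padd mult_ac)
    also have "\<dots> = Fn U e x"
      unfolding Fn_def U_def e_def by (rule group_conv[symmetric, OF fS fT])
    finally show "p x * q x = Fn U e x" .
  qed
  then have pq': "(\<lambda>x. p x * q x) = Fn (supp e) e" using Fn_super[OF fU sU] by simp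
  then have pc: "pol_coeffs (\<lambda>x. p x * q x) = e" by (rule pc_eq[OF fe])
  have ip: "is_pol (\<lambda>x. p x * q x)" using pq' is_pol_Fn[OF fe] by simp
  have "lam (\<lambda>x. p x * q x) = Ten (supp e) e" using lam_Ten[OF ip] pc by simp
  also have "\<dots> = Ten U e" using Ten_super[OF fU sU] by simp
  also have "\<dots> = (\<lambda>M. \<Sum>(a,b)\<in>S \<times> T. cp a * cq b * (if monoset (padd a b) = M then 1 else 0))"
    unfolding Ten_def U_def e_def by (rule ext, rule group_conv[OF fS fT])
  also have "\<dots> = tprod (Ten S cp) (Ten T cq)" by (rule tprod_Ten[symmetric, OF fS fT])
  also have "\<dots> = tprod (lam p) (lam q)" using lam_Ten[OF assms(1)] lam_Ten[OF assms(2)] by (simp add: S_def T_def cp_def cq_def)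
  finally show ?thesis using ip by simp
qed

lemma pol_lin:
  assumes "is_pol p" "is_pol q"
  shows "is_pol (\<lambda>x. \<alpha> * p x + \<beta> * q x) \<and>
         lam (\<lambda>x. \<alpha> * p x + \<beta> * q x) = (\<lambda>M. \<alpha> * lam p M + \<beta> * lam q M)"
proof -
  define cp where "cp = pol_coeffs p"
  define cq where "cq = pol_coeffs q"
  define U where "U = supp cp \<union> supp cq"
  have fS: "finite (supp cp)" and p: "p = Fn (supp cp) cp" using pol_rep[OF assms(1)] by (auto simp: cp_def)
  have fT: "finite (supp cq)" and q: "q = Fn (supp cq) cq" using pol_rep[OF assms(2)] by (auto simp: cq_def)
  have fU: "finite U" using fS fT by (simp add: U_def)
  define e where "e m = \<alpha> * cp m + \<beta> * cq m" for m
  have sU: "supp e \<subseteq> U" by (auto simp: supp_def U_def e_def)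
  have fe: "finite (supp e)" using sU fU finite_subset by blast
  have p': "p = Fn U cp" using p Fn_super[OF fU, of cp] by (simp add: U_def)
  have q': "q = Fn U cq" using q Fn_super[OF fU, of cq] by (simp add: U_def)
  have "(\<lambda>x. \<alpha> * p x + \<beta> * q x) = Fn U e"
    unfolding p' q' Fn_def e_def by (simp add: sum_distrib_left sum.distrib algebra_simps)
  then have pq': "(\<lambda>x. \<alpha> * p x + \<beta> * q x) = Fn (supp e) e" using Fn_super[OF fU sU] by simp
  then have pc: "pol_coeffs (\<lambda>x. \<alpha> * p x + \<beta> * q x) = e" by (rule pc_eq[OF fe])
  have ip: "is_pol (\<lambda>x. \<alpha> * p x + \<beta> * q x)" using pq' is_pol_Fn[OF fe] by simp
  have "lam (\<lambda>x. \<alpha> * p x + \<beta> * q x) = Ten (supp e) e" using lam_Ten[OF ip] pc by simp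
  also have "\<dots> = Ten U e" using Ten_super[OF fU sU] by simp
  also have "\<dots> = (\<lambda>M. \<alpha> * Ten U cp M + \<beta> * Ten U cq M)"
    unfolding Ten_def e_def by (simp add: sum_distrib_left sum.distrib algebra_simps)
  also have "\<dots> = (\<lambda>M. \<alpha> * lam p M + \<beta> * lam q M)"
    using lam_Ten[OF assms(1)] lam_Ten[OF assms(2)] Ten_super[OF fU, of cp] Ten_super[OF fU, of cq] by (simp add: U_def cp_def cq_def)
  finally show ?thesis using ip by simp
qed

definition ld :: "('n::finite) fn \<Rightarrow> bool" where
  "ld f \<longleftrightarrow> (\<forall>i x. (\<lambda>t. f (x + t *\<^sub>R axis i 1)) field_differentiable (at 0))"

lemma pds_append: "pds (a @ b) f = pds a (pds b f)"
  by (induction a) auto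

lemma smooth_alt: "smooth f \<longleftrightarrow> (\<forall>is. continuous_on UNIV (pds is f) \<and> ld (pds is f))"
  unfolding smooth_def ld_def by blast

lemma smooth_closure:
  assumes "\<forall>f\<in>A. continuous_on UNIV f \<and> ld f \<and> (\<forall>i. pd i f \<in> A)" "f \<in> A"
  shows "smooth f"
proof -
  have "pds is f \<in> A" for "is"
  proof (induction "is")
    case Nil then show ?case using assms(2) by simp
  next
    case (Cons i "is") then show ?case using assms(1) by simp
  qed
  then show ?thesis using assms(1) unfolding smooth_alt by blast
qed

lemma smooth_cont: "smooth f \<Longrightarrow> continuous_on UNIV f"
  unfolding smooth_alt by (drule spec[of _ "[]"]) simp

lemma smooth_ld: "smooth f \<Longrightarrow> ld f"
  unfolding smooth_alt by (drule spec[of _ "[]"]) simp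

lemma smooth_pds: "smooth f \<Longrightarrow> smooth (pds a f)"
  unfolding smooth_alt by (simp add: pds_append[symmetric])

lemma smooth_pd: "smooth f \<Longrightarrow> smooth (pd i f)"
  using smooth_pds[of f "[i]"] by simp

lemma ld_DERIV: "ld f \<Longrightarrow> DERIV (\<lambda>t. f (x + t *\<^sub>R axis i 1)) 0 :> pd i f x"
  unfolding ld_def pd_def using DERIV_deriv_iff_field_differentiable by blast

lemma DERIV_ld: "(\<And>i x. DERIV (\<lambda>t. f (x + t *\<^sub>R axis i 1)) 0 :> D i x) \<Longrightarrow> ld f"
  unfolding ld_def field_differentiable_def by blast

lemma DERIV_pd: "(\<And>x. DERIV (\<lambda>t. f (x + t *\<^sub>R axis i 1)) 0 :> D x) \<Longrightarrow> pd i f = D"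
  unfolding pd_def by (rule ext) (rule DERIV_imp_deriv, blast)

lemma smooth_const: "smooth (\<lambda>x::real^'n::finite. c)"
proof (rule smooth_closure[of "{\<lambda>x::real^'n. c | c. True}"])
  show "\<forall>f\<in>{\<lambda>x::real^'n. c | c. True}. continuous_on UNIV f \<and> ld f \<and> (\<forall>i. pd i f \<in> {\<lambda>x::real^'n. c | c. True})"
  proof
    fix f :: "'n fn" assume "f \<in> {\<lambda>x::real^'n. c | c. True}"
    then obtain c where f: "f = (\<lambda>x. c)" by blast
    have D: "DERIV (\<lambda>t. f (x + t *\<^sub>R axis i 1)) 0 :> 0" for x i by (simp add: f)
    have "pd i f = (\<lambda>x. 0)" for i using DERIV_pd[OF D] .
    moreover have "ld f" using D by (rule DERIV_ld)
    moreover have "continuous_on UNIV f" by (simp add: f)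
    ultimately show "continuous_on UNIV f \<and> ld f \<and> (\<forall>i. pd i f \<in> {\<lambda>x::real^'n. c | c. True})" by blast
  qed
qed blast

lemma smooth_lin:
  assumes "smooth f" "smooth g"
  shows "smooth (\<lambda>x. a * f x + b * g x)"
proof (rule smooth_closure[of "{\<lambda>x. a * f x + b * g x | a b f g. smooth f \<and> smooth g}"])
  show "\<forall>h\<in>{\<lambda>x. a * f x + b * g x | a b f g. smooth f \<and> smooth g}. continuous_on UNIV h \<and> ld h \<and>
      (\<forall>i. pd i h \<in> {\<lambda>x. a * f x + b * g x | a b f g. smooth f \<and> smooth g})"
  proof
    fix h assume "h \<in> {\<lambda>x. a * f x + b * g x | a b f g. smooth f \<and> smooth g}"
    then obtain a b f g where h: "h = (\<lambda>x. a * f x + b * g x)" and sf: "smooth f" and sg: "smooth g" by blast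
    have D: "DERIV (\<lambda>t. h (x + t *\<^sub>R axis i 1)) 0 :> a * pd i f x + b * pd i g x" for x i
      unfolding h by (intro DERIV_add DERIV_cmult ld_DERIV smooth_ld sf sg)
    have "continuous_on UNIV h" unfolding h using smooth_cont[OF sf] smooth_cont[OF sg]
      by (intro continuous_intros)
    moreover have "ld h" using D by (rule DERIV_ld)
    moreover have "pd i h \<in> {\<lambda>x. a * f x + b * g x | a b f g. smooth f \<and> smooth g}" for i
      using DERIV_pd[OF D] smooth_pd[OF sf] smooth_pd[OF sg] by blast
    ultimately show "continuous_on UNIV h \<and> ld h \<and> (\<forall>i. pd i h \<in> {\<lambda>x. a * f x + b * g x | a b f g. smooth f \<and> smooth g})"
      by blast
  qed
qed (use assms in blast)

lemma smooth_add: "smooth f \<Longrightarrow> smooth g \<Longrightarrow> smooth (\<lambda>x. f x + g x)"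
  using smooth_lin[of f g 1 1] by simp

lemma smooth_scale: "smooth f \<Longrightarrow> smooth (\<lambda>x. a * f x)"
  using smooth_lin[of f f a 0] by simp

lemma smooth_sum: "finite I \<Longrightarrow> (\<And>i. i \<in> I \<Longrightarrow> smooth (F i)) \<Longrightarrow> smooth (\<lambda>x. \<Sum>i\<in>I. F i x)"
proof (induction I rule: finite_induct)
  case empty then show ?case using smooth_const[of 0] by simp
next
  case (insert a I)
  then show ?case using smooth_add[of "F a" "\<lambda>x. \<Sum>i\<in>I. F i x"] by simp
qed

definition PS :: "('n fn \<times> 'n fn) list \<Rightarrow> 'n fn" where
  "PS L = (\<lambda>x. sum_list (map (\<lambda>(u,v). u x * v x) L))"

definition dL :: "'n::finite \<Rightarrow> ('n fn \<times> 'n fn) list \<Rightarrow> ('n fn \<times> 'n fn) list" where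
  "dL i L = concat (map (\<lambda>(u,v). [(pd i u, v), (u, pd i v)]) L)"

lemma PS_props:
  assumes "\<forall>(u,v)\<in>set L. smooth u \<and> smooth v"
  shows "continuous_on UNIV (PS L) \<and> DERIV (\<lambda>t. PS L (x + t *\<^sub>R axis i 1)) 0 :> PS (dL i L) x"
  using assms
proof (induction L)
  case Nil then show ?case by (simp add: PS_def dL_def)
next
  case (Cons uv L)
  obtain u v where uv: "uv = (u,v)" by fastforce
  have su: "smooth u" and sv: "smooth v" using Cons.prems uv by auto
  have IH: "continuous_on UNIV (PS L) \<and> DERIV (\<lambda>t. PS L (x + t *\<^sub>R axis i 1)) 0 :> PS (dL i L) x"
    using Cons by auto
  have e: "PS (uv # L) = (\<lambda>x. u x * v x + PS L x)" by (simp add: PS_def uv)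
  have e2: "PS (dL i (uv # L)) x = pd i u x * v x + u x * pd i v x + PS (dL i L) x"
    by (simp add: PS_def dL_def uv)
  have "DERIV (\<lambda>t. u (x + t *\<^sub>R axis i 1) * v (x + t *\<^sub>R axis i 1)) 0 :>
          pd i u x * (\<lambda>t. v (x + t *\<^sub>R axis i 1)) 0 + pd i v x * (\<lambda>t. u (x + t *\<^sub>R axis i 1)) 0"
    by (rule DERIV_mult) (intro ld_DERIV smooth_ld su sv)+
  then have "DERIV (\<lambda>t. u (x + t *\<^sub>R axis i 1) * v (x + t *\<^sub>R axis i 1)) 0 :>
          pd i u x * v x + u x * pd i v x" by (simp add: mult.commute)
  then have "DERIV (\<lambda>t. PS (uv # L) (x + t *\<^sub>R axis i 1)) 0 :> PS (dL i (uv # L)) x"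
    unfolding e e2 using IH by (intro DERIV_add) auto
  moreover have "continuous_on UNIV (PS (uv # L))" unfolding e
    using IH smooth_cont[OF su] smooth_cont[OF sv] by (intro continuous_intros) auto
  ultimately show ?case by blast
qed

lemma smooth_mult:
  assumes "smooth f" "smooth g"
  shows "smooth (\<lambda>x. f x * g x)"
proof (rule smooth_closure[of "{PS L | L. \<forall>(u,v)\<in>set L. smooth u \<and> smooth v}"])
  show "\<forall>h\<in>{PS L | L. \<forall>(u,v)\<in>set L. smooth u \<and> smooth v}. continuous_on UNIV h \<and> ld h \<and>
      (\<forall>i. pd i h \<in> {PS L | L. \<forall>(u,v)\<in>set L. smooth u \<and> smooth v})"
  proof
    fix h assume "h \<in> {PS L | L. \<forall>(u,v)\<in>set L. smooth u \<and> smooth v}"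
    then obtain L where h: "h = PS L" and L: "\<forall>(u,v)\<in>set L. smooth u \<and> smooth v" by blast
    have D: "\<And>i x. DERIV (\<lambda>t. h (x + t *\<^sub>R axis i 1)) 0 :> PS (dL i L) x"
      using PS_props[OF L] h by blast
    have "\<forall>(u,v)\<in>set (dL i L). smooth u \<and> smooth v" for i
      using L smooth_pd unfolding dL_def by fastforce
    then have "pd i h \<in> {PS L | L. \<forall>(u,v)\<in>set L. smooth u \<and> smooth v}" for i
      using DERIV_pd[of h i "PS (dL i L)"] D by blast
    moreover have "continuous_on UNIV h" using PS_props[OF L] h by blast
    moreover have "ld h" using D by (rule DERIV_ld)
    ultimately show "continuous_on UNIV h \<and> ld h \<and> (\<forall>i. pd i h \<in> {PS L | L. \<forall>(u,v)\<in>set L. smooth u \<and> smooth v})"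
      by blast
  qed
  show "(\<lambda>x. f x * g x) \<in> {PS L | L. \<forall>(u,v)\<in>set L. smooth u \<and> smooth v}"
    using assms by (intro CollectI exI[of _ "[(f,g)]"]) (simp add: PS_def)
qed

lemma smooth_coord: "smooth (coord j)"
proof (rule smooth_closure[of "range coord \<union> {\<lambda>x. c | c. True}"])
  show "\<forall>f\<in>range coord \<union> {\<lambda>x. c | c. True}. continuous_on UNIV f \<and> ld f \<and> (\<forall>i. pd i f \<in> range coord \<union> {\<lambda>x. c | c. True})"
  proof
    fix f assume "f \<in> range coord \<union> {\<lambda>x. c | c. True}"
    then consider j where "f = coord j" | c where "f = (\<lambda>x. c)" by blast
    then show "continuous_on UNIV f \<and> ld f \<and> (\<forall>i. pd i f \<in> range coord \<union> {\<lambda>x. c | c. True})"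
    proof cases
      case 1
      have D: "DERIV (\<lambda>t. f (x + t *\<^sub>R axis i 1)) 0 :> axis i 1 $ j" for x i
      proof -
        have "(\<lambda>t. f (x + t *\<^sub>R axis i 1)) = (\<lambda>t. x $ j + t * (axis i 1 $ j))"
          by (simp add: 1 coord_def)
        moreover have "DERIV (\<lambda>t. x $ j + t * (axis i 1 $ j)) 0 :> axis i 1 $ j"
          by (auto intro!: derivative_eq_intros)
        ultimately show ?thesis by simp
      qed
      have "continuous_on UNIV f" unfolding 1 coord_def by (intro continuous_intros)
      then show ?thesis using DERIV_ld[OF D] DERIV_pd[OF D] by blast
    next
      case 2
      have D: "DERIV (\<lambda>t. f (x + t *\<^sub>R axis i 1)) 0 :> 0" for x i by (simp add: 2)
      show ?thesis using DERIV_ld[OF D] DERIV_pd[OF D] 2 by auto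
    qed
  qed
qed auto

lemma smooth_C:
  fixes f :: "('n::finite) fn"
  assumes "bidiff B" "smooth f" "smooth g"
  shows "smooth (B f g)"
proof -
  obtain S c where S: "finite (S :: ('n list \<times> 'n list) set)" "\<forall>ab\<in>S. smooth (c ab)"
    "B f g = (\<lambda>x. \<Sum>(a,b)\<in>S. c (a,b) x * pds a f x * pds b g x)"
    using assms unfolding bidiff_def by blast
  have "smooth (\<lambda>x. \<Sum>ab\<in>S. (\<lambda>(a,b). \<lambda>x. c (a,b) x * pds a f x * pds b g x) ab x)"
    using S(1) by (rule smooth_sum) (use S(2) in \<open>auto intro!: smooth_mult smooth_pds assms\<close>)
  then show ?thesis using S(3) by (simp add: case_prod_unfold)
qed

lemma smooth_const_ser: "smooth f \<Longrightarrow> smooth (const_ser f r)"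
  unfolding const_ser_def using smooth_const[of 0] by auto

lemma star_smooth:
  assumes "\<forall>r. bidiff (C r)" "\<forall>t. smooth (F t)" "\<forall>t. smooth (G t)"
  shows "smooth (star C F G r)"
proof -
  have "smooth (\<lambda>x. \<Sum>s\<le>r. \<Sum>t\<le>r - s. C s (F t) (G (r - s - t)) x)"
  proof (rule smooth_sum)
    fix s show "smooth (\<lambda>x. \<Sum>t\<le>r - s. C s (F t) (G (r - s - t)) x)"
    proof (rule smooth_sum)
      fix t show "smooth (C s (F t) (G (r - s - t)))"
        using assms smooth_C by blast
    qed simp
  qed simp
  then show ?thesis unfolding star_def .
qed

lemma star_0:
  assumes "\<forall>f g. smooth f \<longrightarrow> smooth g \<longrightarrow> C 0 f g = (\<lambda>x. f x * g x)" "smooth (F 0)" "smooth (G 0)"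
  shows "star C F G 0 = (\<lambda>x. F 0 x * G 0 x)"
proof -
  have "C 0 (F 0) (G 0) = (\<lambda>x. F 0 x * G 0 x)" using assms by blast
  then show ?thesis unfolding star_def by simp
qed

lemma star_list_smooth:
  assumes "\<forall>r. bidiff (C r)" "\<forall>f\<in>set ws. smooth f"
  shows "smooth (star_list C ws r)"
  using assms(2)
proof (induction ws arbitrary: r)
  case Nil then show ?case by (simp add: one_ser_def smooth_const_ser[OF smooth_const])
next
  case (Cons f ws)
  have "smooth (star C (const_ser f) (star_list C ws) r)"
  proof (rule star_smooth[OF assms(1)])
    show "\<forall>t. smooth (const_ser f t)" using Cons.prems smooth_const_ser by auto
    show "\<forall>t. smooth (star_list C ws t)" using Cons by simp
  qed
  then show ?case by simp
qed

lemma star_list_0: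
  assumes "\<forall>r. bidiff (C r)" "\<forall>f g. smooth f \<longrightarrow> smooth g \<longrightarrow> C 0 f g = (\<lambda>x. f x * g x)"
    "\<forall>f\<in>set ws. smooth f"
  shows "star_list C ws 0 = (\<lambda>x. prod_list (map (\<lambda>f. f x) ws))"
  using assms(3)
proof (induction ws)
  case Nil then show ?case by (simp add: one_ser_def const_ser_def)
next
  case (Cons f ws)
  have "star_list C (f # ws) 0 = star C (const_ser f) (star_list C ws) 0" by simp
  also have "\<dots> = (\<lambda>x. const_ser f 0 x * star_list C ws 0 x)"
    using Cons.prems by (intro star_0 assms(2) star_list_smooth assms(1)) (auto simp: const_ser_def)
  finally show ?case using Cons by (simp add: const_ser_def)
qed

lemma prod_list_upt: "prod_list (map g [0..<k]) = (\<Prod>i<k. g i)"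
  by (induction k) (auto simp: mult.commute)

definition wof :: "'n fn multiset \<Rightarrow> 'n fn list" where
  "wof M = (SOME w. mset w = M)"

lemma mset_wof: "mset (wof M) = M"
  unfolding wof_def by (rule someI_ex, rule ex_mset)

lemma Tmon_alt: "Tmon C M = (\<lambda>r x. (1 / fact (length (wof M))) *
         (\<Sum>\<sigma>\<in>{\<sigma>. \<sigma> permutes {..<length (wof M)}}. star_list C (map (\<lambda>i. wof M ! \<sigma> i) [0..<length (wof M)]) r x))"
  unfolding Tmon_def wof_def Let_def by simp

lemma Tmon_smooth:
  assumes "\<forall>r. bidiff (C r)" "\<forall>f\<in>#M. smooth f"
  shows "smooth (Tmon C M r)"
proof -
  define w where "w = wof M"
  define k where "k = length w"
  have fin: "finite {\<sigma>. \<sigma> permutes {..<k}}" by (rule finite_permutations) simp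
  have "smooth (star_list C (map (\<lambda>i. w ! \<sigma> i) [0..<k]) r)" if "\<sigma> permutes {..<k}" for \<sigma>
  proof (rule star_list_smooth[OF assms(1)])
    show "\<forall>f\<in>set (map (\<lambda>i. w ! \<sigma> i) [0..<k]). smooth f"
    proof
      fix f assume "f \<in> set (map (\<lambda>i. w ! \<sigma> i) [0..<k])"
      then obtain i where i: "i < k" "f = w ! \<sigma> i" by auto
      have "\<sigma> i < k" using permutes_in_image[OF that] i by simp
      then have "f \<in> set w" using i by (simp add: k_def)
      then show "smooth f" using assms(2) mset_wof[of M] w_def by (metis set_mset_mset)
    qed
  qed
  then have "smooth (\<lambda>x. (1 / fact k) * (\<Sum>\<sigma>\<in>{\<sigma>. \<sigma> permutes {..<k}}. star_list C (map (\<lambda>i. w ! \<sigma> i) [0..<k]) r x))"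
    by (intro smooth_scale smooth_sum fin) auto
  then show ?thesis unfolding Tmon_alt w_def k_def by simp
qed

lemma prod_monoset: "prod_mset (image_mset (\<lambda>f. f x) (monoset m)) = monom m x"
proof -
  have "prod_mset (image_mset (\<lambda>f. f x) (\<Sum>i\<in>I. replicate_mset (m i) (coord i))) = (\<Prod>i\<in>I. (x$i)^(m i))"
    if "finite I" for I
    using that by (induction I rule: finite_induct)
      (auto simp: image_mset_union image_replicate_mset prod_mset_replicate_mset coord_def)
  then show ?thesis unfolding monoset_def monom_def by simp
qed

lemma Tmon_0:
  assumes "\<forall>r. bidiff (C r)" "\<forall>f g. smooth f \<longrightarrow> smooth g \<longrightarrow> C 0 f g = (\<lambda>x. f x * g x)"
  shows "Tmon C (monoset m) 0 x = monom m x"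
proof -
  define w where "w = wof (monoset m)"
  define k where "k = length w"
  have sw: "\<forall>f\<in>set w. smooth f"
  proof
    fix f assume "f \<in> set w"
    then have "f \<in># monoset m" using mset_wof w_def by (metis set_mset_mset)
    then show "smooth f" using set_monoset smooth_coord by blast
  qed
  have "star_list C (map (\<lambda>i. w ! \<sigma> i) [0..<k]) 0 x = prod_list (map (\<lambda>f. f x) w)"
    if "\<sigma> permutes {..<k}" for \<sigma>
  proof -
    have s: "\<forall>f\<in>set (map (\<lambda>i. w ! \<sigma> i) [0..<k]). smooth f"
    proof
      fix f assume "f \<in> set (map (\<lambda>i. w ! \<sigma> i) [0..<k])"
      then obtain i where i: "i < k" "f = w ! \<sigma> i" by auto
      have "\<sigma> i < k" using permutes_in_image[OF that] i by simp
      then have "f \<in> set w" using i by (simp add: k_def)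
      then show "smooth f" using sw by blast
    qed
    have "star_list C (map (\<lambda>i. w ! \<sigma> i) [0..<k]) 0 x = (\<Prod>i<k. (w ! \<sigma> i) x)"
      using star_list_0[OF assms s] by (simp add: prod_list_upt[of "\<lambda>i. (w ! \<sigma> i) x", symmetric] comp_def)
    also have "\<dots> = (\<Prod>i<k. (w ! i) x)"
      using prod.permute[OF that, of "\<lambda>i. (w ! i) x"] by (simp add: comp_def)
    also have "\<dots> = prod_list (map (\<lambda>f. f x) w)"
    proof -
      have "(\<Prod>i<k. (w ! i) x) = prod_list (map (\<lambda>i. (w ! i) x) [0..<k])"
        by (rule prod_list_upt[symmetric])
      also have "\<dots> = prod_list (map (\<lambda>f. f x) (map (\<lambda>i. w ! i) [0..<k]))"
        by (simp add: comp_def)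
      also have "\<dots> = prod_list (map (\<lambda>f. f x) w)" unfolding k_def map_nth ..
      finally show ?thesis .
    qed
    finally show ?thesis .
  qed
  moreover have "prod_list (map (\<lambda>f. f x) w) = monom m x"
    using prod_monoset[of x m] mset_wof[of "monoset m"] unfolding w_def
    by (metis mset_map prod_mset_prod_list)
  ultimately have "(\<Sum>\<sigma>\<in>{\<sigma>. \<sigma> permutes {..<k}}. star_list C (map (\<lambda>i. w ! \<sigma> i) [0..<k]) 0 x)
      = fact k * monom m x"
    using card_permutations[of "{..<k}" k] by simp
  then show ?thesis unfolding Tmon_alt w_def k_def by simp
qed

lemma Tstar_super:
  assumes "finite U" "{M. A M \<noteq> 0} \<subseteq> U"
  shows "Tstar C A = (\<lambda>r x. \<Sum>M\<in>U. A M * Tmon C M r x)"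
  unfolding Tstar_def
proof (intro ext)
  fix r x
  show "(\<Sum>M\<in>{M. A M \<noteq> 0}. A M * Tmon C M r x) = (\<Sum>M\<in>U. A M * Tmon C M r x)"
    by (rule sum.mono_neutral_left[OF assms(1) assms(2)]) simp
qed

lemma Ten_monoset: "finite S \<Longrightarrow> m \<in> S \<Longrightarrow> Ten S c (monoset m) = c m"
proof -
  assume "finite S" "m \<in> S"
  have "Ten S c (monoset m) = (\<Sum>m'\<in>S. if m' = m then c m' else 0)"
    unfolding Ten_def by (rule sum.cong) (auto dest: monoset_inj)
  then show ?thesis using \<open>finite S\<close> \<open>m \<in> S\<close> by (simp add: sum.delta')
qed

lemma Ten_supp: "{M. Ten S c M \<noteq> 0} \<subseteq> monoset ` S"
proof
  fix M assume "M \<in> {M. Ten S c M \<noteq> 0}"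
  then have ne: "(\<Sum>m\<in>S. c m * (if monoset m = M then 1 else 0)) \<noteq> 0" by (simp add: Ten_def)
  show "M \<in> monoset ` S"
  proof (rule ccontr)
    assume "M \<notin> monoset ` S"
    then have "\<forall>m\<in>S. c m * (if monoset m = M then 1 else 0) = 0" by auto
    then have "(\<Sum>m\<in>S. c m * (if monoset m = M then 1 else 0)) = 0" by (rule sum.neutral)
    with ne show False by simp
  qed
qed

lemma Tstar_Ten:
  assumes "finite S"
  shows "Tstar C (Ten S c) = (\<lambda>r x. \<Sum>m\<in>S. c m * Tmon C (monoset m) r x)"
proof -
  have inj: "inj_on monoset S" by (rule inj_onI) (rule monoset_inj)
  have "Tstar C (Ten S c) = (\<lambda>r x. \<Sum>M\<in>monoset ` S. Ten S c M * Tmon C M r x)"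
    using assms Ten_supp by (intro Tstar_super) auto
  also have "\<dots> = (\<lambda>r x. \<Sum>m\<in>S. Ten S c (monoset m) * Tmon C (monoset m) r x)"
    by (simp add: sum.reindex[OF inj])
  also have "\<dots> = (\<lambda>r x. \<Sum>m\<in>S. c m * Tmon C (monoset m) r x)"
    using assms Ten_monoset by (intro ext sum.cong) auto
  finally show ?thesis .
qed

lemma lam_fin: "is_pol p \<Longrightarrow> finite {M. lam p M \<noteq> 0}"
proof -
  assume a: "is_pol p"
  have "{M. lam p M \<noteq> 0} \<subseteq> monoset ` supp (pol_coeffs p)"
    using lam_Ten[OF a] Ten_supp by simp
  moreover have "finite (monoset ` supp (pol_coeffs p))" using pol_rep[OF a] by blast
  ultimately show ?thesis by (rule finite_subset)
qed

lemma Tstar_lam: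
  assumes "is_pol p"
  shows "Tstar C (lam p) = (\<lambda>r x. \<Sum>m\<in>supp (pol_coeffs p). pol_coeffs p m * Tmon C (monoset m) r x)"
proof -
  have "finite (supp (pol_coeffs p))" using pol_rep[OF assms] by blast
  then show ?thesis using lam_Ten[OF assms] Tstar_Ten by simp
qed

lemma Tstar_lam_smooth:
  fixes p :: "('n::finite) fn"
  assumes "is_pol p" "\<forall>r. bidiff (C r)"
  shows "smooth (Tstar C (lam p) r)"
proof -
  have "smooth (\<lambda>x. \<Sum>m\<in>supp (pol_coeffs p). pol_coeffs p m * Tmon C (monoset m) r x)"
  proof (rule smooth_sum)
    show "finite (supp (pol_coeffs p))" using pol_rep[OF assms(1)] by blast
    fix m :: "'n \<Rightarrow> nat"
    have "\<forall>f\<in>#monoset m. smooth f" using set_monoset smooth_coord by blast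
    then show "smooth (\<lambda>x. pol_coeffs p m * Tmon C (monoset m) r x)"
      by (intro smooth_scale Tmon_smooth assms(2))
  qed
  then show ?thesis using Tstar_lam[OF assms(1)] by simp
qed

lemma Tstar_lam_0:
  assumes "is_pol p" "\<forall>r. bidiff (C r)" "\<forall>f g. smooth f \<longrightarrow> smooth g \<longrightarrow> C 0 f g = (\<lambda>x. f x * g x)"
  shows "Tstar C (lam p) 0 = p"
proof -
  have "Tstar C (lam p) 0 = (\<lambda>x. \<Sum>m\<in>supp (pol_coeffs p). pol_coeffs p m * monom m x)"
    using Tstar_lam[OF assms(1)] Tmon_0[OF assms(2,3)] by simp
  also have "\<dots> = p" using pol_rep[OF assms(1)] unfolding Fn_def by simp
  finally show ?thesis .
qed

lemma Tstar_lin: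
  assumes "is_pol p" "is_pol q"
  shows "Tstar C (lam (\<lambda>x. \<alpha> * p x + \<beta> * q x)) = (\<lambda>r x. \<alpha> * Tstar C (lam p) r x + \<beta> * Tstar C (lam q) r x)"
proof -
  define U where "U = {M. lam p M \<noteq> 0} \<union> {M. lam q M \<noteq> 0}"
  have fU: "finite U" using lam_fin[OF assms(1)] lam_fin[OF assms(2)] by (simp add: U_def)
  have l: "lam (\<lambda>x. \<alpha> * p x + \<beta> * q x) = (\<lambda>M. \<alpha> * lam p M + \<beta> * lam q M)"
    using pol_lin[OF assms] by blast
  have "Tstar C (lam (\<lambda>x. \<alpha> * p x + \<beta> * q x)) = (\<lambda>r x. \<Sum>M\<in>U. (\<alpha> * lam p M + \<beta> * lam q M) * Tmon C M r x)"
    unfolding l by (rule Tstar_super[OF fU]) (auto simp: U_def)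
  moreover have "Tstar C (lam p) = (\<lambda>r x. \<Sum>M\<in>U. lam p M * Tmon C M r x)"
    by (rule Tstar_super[OF fU]) (auto simp: U_def)
  moreover have "Tstar C (lam q) = (\<lambda>r x. \<Sum>M\<in>U. lam q M * Tmon C M r x)"
    by (rule Tstar_super[OF fU]) (auto simp: U_def)
  ultimately show ?thesis
    by (simp add: algebra_simps sum.distrib sum_distrib_left)
qed

lemma sun_eq:
  assumes "is_pol (F 0)" "is_pol (G 0)"
  shows "sun C F G = Tstar C (lam (\<lambda>x. F 0 x * G 0 x))"
  unfolding sun_def proj0_def using pol_mult[OF assms] by simp

lemma is_pol_mult: "is_pol p \<Longrightarrow> is_pol q \<Longrightarrow> is_pol (\<lambda>x. p x * q x)"
  using pol_mult by blast

lemma is_pol_lin: "is_pol p \<Longrightarrow> is_pol q \<Longrightarrow> is_pol (\<lambda>x. a * p x + b * q x)"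
  using pol_lin by blast

lemma is_pol_0: "is_pol (\<lambda>x::real^'n::finite. 0)"
  unfolding is_pol_def by (rule exI[of _ "\<lambda>m. 0"]) simp

lemma pc_0: "pol_coeffs (\<lambda>x::real^'n::finite. 0) = (\<lambda>m. 0)"
  by (rule pc_eq) (auto simp: supp_def Fn_def)

lemma is_pol_1: "is_pol (\<lambda>x::real^'n::finite. 1)"
proof -
  define c :: "('n \<Rightarrow> nat) \<Rightarrow> real" where "c m = (if m = (\<lambda>i. 0) then 1 else 0)" for m
  have "supp c = {\<lambda>i. 0}" by (auto simp: supp_def c_def)
  then have "Fn (supp c) c = (\<lambda>x. 1)" by (simp add: Fn_def c_def monom_def)
  then show ?thesis using is_pol_Fn[of c] \<open>supp c = {\<lambda>i. 0}\<close> by simp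
qed

theorem lemma1:
  fixes P :: "('n::finite) fn \<Rightarrow> 'n fn \<Rightarrow> 'n fn"
    and C :: "nat \<Rightarrow> 'n fn \<Rightarrow> 'n fn \<Rightarrow> 'n fn"
  assumes "poisson_bracket P"
    and "star_product P C"
  shows "(\<forall>F\<in>(N0 :: 'n fser set). \<forall>G\<in>N0. ser_add F G \<in> N0) \<and>
         (\<forall>a. \<forall>F\<in>(N0 :: 'n fser set). ser_scale a F \<in> N0) \<and>
         (\<forall>F\<in>N0. \<forall>G\<in>N0. sun C F G \<in> N0) \<and>
         (\<forall>F\<in>N0. \<forall>G\<in>N0. sun C F G = sun C G F) \<and>
         (\<forall>F\<in>N0. \<forall>G\<in>N0. \<forall>H\<in>N0. sun C (sun C F G) H = sun C F (sun C G H)) \<and>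
         (\<forall>a b. \<forall>F\<in>N0. \<forall>F'\<in>N0. \<forall>G\<in>N0.
             sun C (ser_add (ser_scale a F) (ser_scale b F')) G
               = ser_add (ser_scale a (sun C F G)) (ser_scale b (sun C F' G)) \<and>
             sun C G (ser_add (ser_scale a F) (ser_scale b F'))
               = ser_add (ser_scale a (sun C G F)) (ser_scale b (sun C G F'))) \<and>
         \<not> (\<forall>c. \<forall>F\<in>N0. \<forall>G\<in>N0.
             sun C (ser_smult c F) G = ser_smult c (sun C F G) \<and>
             sun C F (ser_smult c G) = ser_smult c (sun C F G))"
proof -
  have bid: "\<forall>r. bidiff (C r)" using assms(2) unfolding star_product_def by blast
  have C0: "\<forall>f g. smooth f \<longrightarrow> smooth g \<longrightarrow> C 0 f g = (\<lambda>x. f x * g x)"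
    using assms(2) unfolding star_product_def by blast
  have N0I: "X \<in> N0" if "\<And>r. smooth (X r)" "is_pol (X 0)" for X :: "'n fser"
    using that unfolding N0_def by blast
  have N0s: "smooth (X r)" if "X \<in> N0" for X :: "'n fser" and r
    using that unfolding N0_def by blast
  have N0p: "is_pol (X 0)" if "X \<in> N0" for X :: "'n fser"
    using that unfolding N0_def by blast
  have sun_N0: "sun C F G \<in> N0" if "F \<in> N0" "G \<in> N0" for F G :: "'n fser"
  proof (rule N0I)
    have pq: "is_pol (\<lambda>x. F 0 x * G 0 x)" using is_pol_mult N0p that by blast
    show "smooth (sun C F G r)" for r
      using sun_eq[of F G C, OF N0p[OF that(1)] N0p[OF that(2)]] Tstar_lam_smooth[OF pq bid] by simp
    show "is_pol (sun C F G 0)"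
      using sun_eq[of F G C, OF N0p[OF that(1)] N0p[OF that(2)]] Tstar_lam_0[OF pq bid C0] pq by simp
  qed
  have sun_0: "sun C F G 0 = (\<lambda>x. F 0 x * G 0 x)" if "F \<in> N0" "G \<in> N0" for F G :: "'n fser"
  proof -
    have pq: "is_pol (\<lambda>x. F 0 x * G 0 x)" using is_pol_mult N0p that by blast
    show ?thesis using sun_eq[of F G C, OF N0p[OF that(1)] N0p[OF that(2)]] Tstar_lam_0[OF pq bid C0] by simp
  qed
  have part1: "\<forall>F\<in>(N0 :: 'n fser set). \<forall>G\<in>N0. ser_add F G \<in> N0"
  proof (intro ballI N0I)
    fix F G :: "'n fser" assume "F \<in> N0" "G \<in> N0"
    then show "smooth (ser_add F G r)" for r
      unfolding ser_add_def using smooth_add N0s by blast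
    have "is_pol (\<lambda>x. 1 * F 0 x + 1 * G 0 x)" using is_pol_lin N0p \<open>F \<in> N0\<close> \<open>G \<in> N0\<close> by blast
    then show "is_pol (ser_add F G 0)" unfolding ser_add_def by simp
  qed
  have part2: "\<forall>a. \<forall>F\<in>(N0 :: 'n fser set). ser_scale a F \<in> N0"
  proof (intro allI ballI N0I)
    fix a and F :: "'n fser" assume "F \<in> N0"
    then show "smooth (ser_scale a F r)" for r
      unfolding ser_scale_def using smooth_scale N0s by blast
    have "is_pol (\<lambda>x. a * F 0 x + 0 * F 0 x)" using is_pol_lin N0p \<open>F \<in> N0\<close> by blast
    then show "is_pol (ser_scale a F 0)" unfolding ser_scale_def by simp
  qed
  have part3: "\<forall>F\<in>N0. \<forall>G\<in>N0. sun C F G \<in> N0" using sun_N0 by blast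
  have part4: "\<forall>F\<in>N0. \<forall>G\<in>N0. sun C F G = sun C G F"
  proof (intro ballI)
    fix F G :: "'n fser" assume "F \<in> N0" "G \<in> N0"
    then show "sun C F G = sun C G F"
      using sun_eq[of F G C] sun_eq[of G F C] N0p by (simp add: mult.commute)
  qed
  have part5: "\<forall>F\<in>N0. \<forall>G\<in>N0. \<forall>H\<in>N0. sun C (sun C F G) H = sun C F (sun C G H)"
  proof (intro ballI)
    fix F G H :: "'n fser" assume F: "F \<in> N0" and G: "G \<in> N0" and H: "H \<in> N0"
    have "sun C (sun C F G) H = Tstar C (lam (\<lambda>x. (F 0 x * G 0 x) * H 0 x))"
      using sun_eq[of "sun C F G" H C, OF N0p[OF sun_N0[OF F G]] N0p[OF H]] sun_0[OF F G] by simp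
    moreover have "sun C F (sun C G H) = Tstar C (lam (\<lambda>x. F 0 x * (G 0 x * H 0 x)))"
      using sun_eq[of F "sun C G H" C, OF N0p[OF F] N0p[OF sun_N0[OF G H]]] sun_0[OF G H] by simp
    ultimately show "sun C (sun C F G) H = sun C F (sun C G H)" by (simp add: mult.assoc)
  qed
  have part6: "\<forall>a b. \<forall>F\<in>N0. \<forall>F'\<in>N0. \<forall>G\<in>N0.
             sun C (ser_add (ser_scale a F) (ser_scale b F')) G
               = ser_add (ser_scale a (sun C F G)) (ser_scale b (sun C F' G)) \<and>
             sun C G (ser_add (ser_scale a F) (ser_scale b F'))
               = ser_add (ser_scale a (sun C G F)) (ser_scale b (sun C G F'))"
  proof (intro allI ballI conjI)
    fix a b and F F' G :: "'n fser" assume F: "F \<in> N0" and F': "F' \<in> N0" and G: "G \<in> N0"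
    define X where "X = ser_add (ser_scale a F) (ser_scale b F')"
    have X0: "X 0 = (\<lambda>x. a * F 0 x + b * F' 0 x)" by (simp add: X_def ser_add_def ser_scale_def)
    have pX: "is_pol (X 0)" unfolding X0 using is_pol_lin N0p F F' by blast
    have pFG: "is_pol (\<lambda>x. F 0 x * G 0 x)" using is_pol_mult N0p F G by blast
    have pF'G: "is_pol (\<lambda>x. F' 0 x * G 0 x)" using is_pol_mult N0p F' G by blast
    have pGF: "is_pol (\<lambda>x. G 0 x * F 0 x)" using is_pol_mult N0p F G by blast
    have pGF': "is_pol (\<lambda>x. G 0 x * F' 0 x)" using is_pol_mult N0p F' G by blast
    have "sun C X G = Tstar C (lam (\<lambda>x. X 0 x * G 0 x))" using sun_eq[of X G C, OF pX N0p[OF G]] .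
    also have "(\<lambda>x. X 0 x * G 0 x) = (\<lambda>x. a * (F 0 x * G 0 x) + b * (F' 0 x * G 0 x))"
      unfolding X0 by (simp add: algebra_simps)
    also have "Tstar C (lam \<dots>) = (\<lambda>r x. a * Tstar C (lam (\<lambda>x. F 0 x * G 0 x)) r x + b * Tstar C (lam (\<lambda>x. F' 0 x * G 0 x)) r x)"
      by (rule Tstar_lin[OF pFG pF'G])
    also have "\<dots> = ser_add (ser_scale a (sun C F G)) (ser_scale b (sun C F' G))"
      using sun_eq[of F G C, OF N0p[OF F] N0p[OF G]] sun_eq[of F' G C, OF N0p[OF F'] N0p[OF G]]
      by (simp add: ser_add_def ser_scale_def)
    finally show "sun C (ser_add (ser_scale a F) (ser_scale b F')) G
               = ser_add (ser_scale a (sun C F G)) (ser_scale b (sun C F' G))" unfolding X_def .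
    have "sun C G X = Tstar C (lam (\<lambda>x. G 0 x * X 0 x))" using sun_eq[of G X C, OF N0p[OF G] pX] .
    also have "(\<lambda>x. G 0 x * X 0 x) = (\<lambda>x. a * (G 0 x * F 0 x) + b * (G 0 x * F' 0 x))"
      unfolding X0 by (simp add: algebra_simps)
    also have "Tstar C (lam \<dots>) = (\<lambda>r x. a * Tstar C (lam (\<lambda>x. G 0 x * F 0 x)) r x + b * Tstar C (lam (\<lambda>x. G 0 x * F' 0 x)) r x)"
      by (rule Tstar_lin[OF pGF pGF'])
    also have "\<dots> = ser_add (ser_scale a (sun C G F)) (ser_scale b (sun C G F'))"
      using sun_eq[of G F C, OF N0p[OF G] N0p[OF F]] sun_eq[of G F' C, OF N0p[OF G] N0p[OF F']]
      by (simp add: ser_add_def ser_scale_def)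
    finally show "sun C G (ser_add (ser_scale a F) (ser_scale b F'))
               = ser_add (ser_scale a (sun C G F)) (ser_scale b (sun C G F'))" unfolding X_def .
  qed
  have part7: "\<not> (\<forall>c. \<forall>F\<in>N0. \<forall>G\<in>N0.
             sun C (ser_smult c F) G = ser_smult c (sun C F G) \<and>
             sun C F (ser_smult c G) = ser_smult c (sun C F G))"
  proof
    assume H: "\<forall>c. \<forall>F\<in>N0. \<forall>G\<in>N0.
             sun C (ser_smult c F) G = ser_smult c (sun C F G) \<and>
             sun C F (ser_smult c G) = ser_smult c (sun C F G)"
    define c0 :: "nat \<Rightarrow> real" where "c0 s = (if s = 1 then 1 else 0)" for s
    define O1 :: "'n fser" where "O1 = one_ser"
    have O10: "O1 0 = (\<lambda>x. 1)" by (simp add: O1_def one_ser_def const_ser_def)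
    have O1N: "O1 \<in> N0"
    proof (rule N0I)
      show "smooth (O1 r)" for r unfolding O1_def one_ser_def by (rule smooth_const_ser[OF smooth_const])
      show "is_pol (O1 0)" unfolding O10 by (rule is_pol_1)
    qed
    have eq: "sun C (ser_smult c0 O1) O1 = ser_smult c0 (sun C O1 O1)" using H O1N by blast
    have S0: "ser_smult c0 O1 0 = (\<lambda>x. 0)" by (simp add: ser_smult_def c0_def)
    have "sun C (ser_smult c0 O1) O1 = Tstar C (lam (\<lambda>x. ser_smult c0 O1 0 x * O1 0 x))"
      using sun_eq[of "ser_smult c0 O1" O1 C] S0 is_pol_0 N0p[OF O1N] by simp
    also have "(\<lambda>x. ser_smult c0 O1 0 x * O1 0 x) = (\<lambda>x. 0)" using S0 by simp
    also have "Tstar C (lam (\<lambda>x::real^'n. 0)) = (\<lambda>r x. 0)"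
      unfolding Tstar_lam[OF is_pol_0, of C] pc_0 supp_def by simp
    finally have L: "sun C (ser_smult c0 O1) O1 1 0 = 0" by simp
    have "ser_smult c0 (sun C O1 O1) 1 0 = sun C O1 O1 0 0"
      by (simp add: ser_smult_def c0_def)
    also have "\<dots> = 1" using sun_0[OF O1N O1N] O10 by simp
    finally show False using eq L by simp
  qed
  show ?thesis using part1 part2 part3 part4 part5 part6 part7 by blast
qed

end
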